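(* In the augmented graph setting of the context, suppose $\sigma,\kappa$ satisfy $\sigma\ge\sigma_i$ and $\kappa\ge\kappa_i$ for all $i$, and that for every virtual edge between center node $i$ and virtual node $(i,j)$ the weight satisfies $\mu_{ij}^2=\frac{\lambda_{\min}^+(L)}{\sigma\kappa_i}L_{i,j}$. Then $$\lambda_{\min}^+(\tilde L)\ge\frac{\lambda_{\min}^+(L)}{2\sigma\kappa},\qquad \tilde L=\Sigma^{-1/2}AA^T\Sigma^{-1/2}.$$
   Context: $G$ is a connected undirected graph on $n$ nodes with edge set $E^{\rm comm}$ of size $E$. For each $i$, $\sigma_i>0$ and $L_{i,j}>0$ ($j=1,\dots,m$), and $\kappa_i=1+\sigma_i^{-1}\sum_{j=1}^mL_{i,j}$. The augmented graph has $n(1+m)$ nodes (center nodes $i$ and virtual nodes $(i,j)$) and edges: those of $G$ plus the virtual edges $i$–$(i,j)$, each with a fixed orientation. With weights $\mu_{k\ell}>0$ (arbitrary on edges of $G$), $A\in\mathbb{R}^{n(1+m)\times(E+nm)}$ is defined by $Ae_{k\ell}=\mu_{k\ell}(e^{(k)}-e^{(\ell)})$, and $L=A_{\rm comm}A_{\rm comm}^T\in\mathbb{R}^{n\times n}$ where $A_{\rm comm}e_{k\ell}=\mu_{k\ell}(e^{(k)}-e^{(\ell)})$ for $(k,\ell)\in E^{\rm comm}$ (the weighted Laplacian of $G$). $\Sigma$ is the diagonal matrix with $\sigma_i$ at center node $i$ and $L_{i,j}$ at virtual node $(i,j)$. $\lambda_{\min}^+$ denotes the smallest nonzero eigenvalue.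 *)

theory Defs
  imports Main "HOL.Real" Complex_Main
begin

(* Nodes of the augmented graph: center node i, virtual node (i,j). *)
datatype anode = Cn nat | Vn nat nat

(* Edges of the augmented graph: communication edge (k,l) oriented k->l,
   virtual edge between center i and virtual node (i,j) oriented i->(i,j). *)
datatype aedge = Ec nat nat | Ev nat nat

definition graph_connected :: "nat \<Rightarrow> (nat \<times> nat) set \<Rightarrow> bool" where
  "graph_connected n E \<longleftrightarrow>
     (\<forall>i<n. \<forall>j<n. (\<lambda>a b. (a, b) \<in> E \<or> (b, a) \<in> E)\<^sup>*\<^sup>* i j)"

definition aug_nodes :: "nat \<Rightarrow> nat \<Rightarrow> anode set" where
  "aug_nodes n m = Cn ` {..<n} \<union> {Vn i j | i j. i < n \<and> j < m}"

definition aug_edges :: "(nat \<times> nat) set \<Rightarrow> nat \<Rightarrow> nat \<Rightarrow> aedge set" where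
  "aug_edges E n m = (\<lambda>(k, l). Ec k l) ` E \<union> {Ev i j | i j. i < n \<and> j < m}"

fun incA :: "(aedge \<Rightarrow> real) \<Rightarrow> anode \<Rightarrow> aedge \<Rightarrow> real" where
  "incA mu x (Ec k l) = mu (Ec k l) * ((if x = Cn k then 1 else 0) - (if x = Cn l then 1 else 0))"
| "incA mu x (Ev i j) = mu (Ev i j) * ((if x = Cn i then 1 else 0) - (if x = Vn i j then 1 else 0))"

definition AAT :: "(nat \<times> nat) set \<Rightarrow> nat \<Rightarrow> nat \<Rightarrow> (aedge \<Rightarrow> real) \<Rightarrow> anode \<Rightarrow> anode \<Rightarrow> real" where
  "AAT E n m mu x y = (\<Sum>e\<in>aug_edges E n m. incA mu x e * incA mu y e)"

definition incAc :: "(aedge \<Rightarrow> real) \<Rightarrow> nat \<Rightarrow> nat \<times> nat \<Rightarrow> real" where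
  "incAc mu i e = mu (Ec (fst e) (snd e)) *
     ((if i = fst e then 1 else 0) - (if i = snd e then 1 else 0))"

definition lapL :: "(nat \<times> nat) set \<Rightarrow> (aedge \<Rightarrow> real) \<Rightarrow> nat \<Rightarrow> nat \<Rightarrow> real" where
  "lapL E mu i k = (\<Sum>e\<in>E. incAc mu i e * incAc mu k e)"

fun Sigma_diag :: "(nat \<Rightarrow> real) \<Rightarrow> (nat \<Rightarrow> nat \<Rightarrow> real) \<Rightarrow> anode \<Rightarrow> real" where
  "Sigma_diag sigma Lw (Cn i) = sigma i"
| "Sigma_diag sigma Lw (Vn i j) = Lw i j"

definition Ltilde :: "(nat \<times> nat) set \<Rightarrow> nat \<Rightarrow> nat \<Rightarrow> (aedge \<Rightarrow> real) \<Rightarrow> (nat \<Rightarrow> real)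
    \<Rightarrow> (nat \<Rightarrow> nat \<Rightarrow> real) \<Rightarrow> anode \<Rightarrow> anode \<Rightarrow> real" where
  "Ltilde E n m mu sigma Lw x y =
     AAT E n m mu x y / (sqrt (Sigma_diag sigma Lw x) * sqrt (Sigma_diag sigma Lw y))"

definition kappa :: "(nat \<Rightarrow> real) \<Rightarrow> (nat \<Rightarrow> nat \<Rightarrow> real) \<Rightarrow> nat \<Rightarrow> nat \<Rightarrow> real" where
  "kappa sigma Lw m i = 1 + (\<Sum>j<m. Lw i j) / sigma i"

definition is_eigenvalue :: "'v set \<Rightarrow> ('v \<Rightarrow> 'v \<Rightarrow> real) \<Rightarrow> real \<Rightarrow> bool" where
  "is_eigenvalue V M lam \<longleftrightarrow>
     (\<exists>v. (\<exists>x\<in>V. v x \<noteq> 0) \<and> (\<forall>x\<in>V. (\<Sum>y\<in>V. M x y * v y) = lam * v x))"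

definition lambda_min_pos :: "'v set \<Rightarrow> ('v \<Rightarrow> 'v \<Rightarrow> real) \<Rightarrow> real" where
  "lambda_min_pos V M = Min {lam. is_eigenvalue V M lam \<and> lam \<noteq> 0}"

end

theory Submission
  imports Defs "HOL-Analysis.Analysis" "Jordan_Normal_Form.Char_Poly"
begin

lemma finite_eig:
  assumes "finite V" shows "finite {lam. is_eigenvalue V M lam}"
proof -
  obtain f where f: "bij_betw f {0..<card V} V" using ex_bij_betw_nat_finite[OF assms] by blast
  define N where "N = card V"
  define A where "A = Matrix.mat N N (\<lambda>(i,j). M (f i) (f j))"
  have A: "A \<in> carrier_mat N N" by (simp add: A_def)
  have "{lam. is_eigenvalue V M lam} \<subseteq> {lam. poly (char_poly A) lam = 0}"
  proof safe
    fix lam assume "is_eigenvalue V M lam"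
    then obtain v where v: "\<exists>x\<in>V. v x \<noteq> 0" "\<forall>x\<in>V. (\<Sum>y\<in>V. M x y * v y) = lam * v x"
      unfolding is_eigenvalue_def by blast
    define u where "u = Matrix.vec N (\<lambda>i. v (f i))"
    have "eigenvector A u lam" unfolding eigenvector_def
    proof (intro conjI)
      show "u \<in> carrier_vec (dim_row A)" by (simp add: u_def A_def)
      obtain x where x: "x \<in> V" "v x \<noteq> 0" using v(1) by blast
      then obtain i where i: "i < N" "f i = x" using f unfolding N_def bij_betw_def by force
      show "u \<noteq> 0\<^sub>v (dim_row A)"
      proof
        assume "u = 0\<^sub>v (dim_row A)"
        then have "u $ i = 0" using i by (simp add: A_def)
        then show False using i x by (simp add: u_def)
      qed
      show "A *\<^sub>v u = lam \<cdot>\<^sub>v u"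
      proof (rule eq_vecI)
        fix i assume "i < dim_vec (lam \<cdot>\<^sub>v u)"
        then have i: "i < N" by (simp add: u_def)
        then have fi: "f i \<in> V" using f unfolding N_def bij_betw_def by auto
        have "(A *\<^sub>v u) $ i = (\<Sum>j\<in>{0..<N}. M (f i) (f j) * v (f j))"
          using i by (simp add: A_def u_def scalar_prod_def)
        also have "\<dots> = (\<Sum>y\<in>V. M (f i) y * v y)"
          using sum.reindex_bij_betw[OF f, of "\<lambda>y. M (f i) y * v y"] by (simp add: N_def)
        also have "\<dots> = lam * v (f i)" using v(2) fi by blast
        finally show "(A *\<^sub>v u) $ i = (lam \<cdot>\<^sub>v u) $ i" using i by (simp add: u_def)
      qed (simp add: A_def u_def)
    qed
    then show "poly (char_poly A) lam = 0"
      using eigenvalue_root_char_poly[OF A] eigenvalue_def by blast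
  qed
  moreover have "char_poly A \<noteq> 0" using degree_monic_char_poly[OF A] by auto
  ultimately show ?thesis using finite_subset poly_roots_finite by blast
qed
definition qf :: "'v set \<Rightarrow> ('v \<Rightarrow> 'v \<Rightarrow> real) \<Rightarrow> ('v \<Rightarrow> real) \<Rightarrow> real" where
  "qf V M y = (\<Sum>x\<in>V. \<Sum>z\<in>V. y x * M x z * y z)"
definition nsq :: "'v set \<Rightarrow> ('v \<Rightarrow> real) \<Rightarrow> real" where
  "nsq V y = (\<Sum>x\<in>V. (y x)\<^sup>2)"
definition ip :: "'v set \<Rightarrow> ('v \<Rightarrow> real) \<Rightarrow> ('v \<Rightarrow> real) \<Rightarrow> real" where
  "ip V w y = (\<Sum>x\<in>V. w x * y x)"
definition mv :: "'v set \<Rightarrow> ('v \<Rightarrow> 'v \<Rightarrow> real) \<Rightarrow> ('v \<Rightarrow> real) \<Rightarrow> 'v \<Rightarrow> real" where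
  "mv V M y x = (\<Sum>z\<in>V. M x z * y z)"

lemma qf_expand:
  assumes sym: "\<forall>x\<in>V. \<forall>z\<in>V. M x z = M z x"
  shows "qf V M (\<lambda>x. a x + t * b x) = qf V M a + 2 * t * (\<Sum>x\<in>V. b x * mv V M a x) + t\<^sup>2 * qf V M b"
proof -
  have s: "(\<Sum>x\<in>V. \<Sum>z\<in>V. a x * M x z * b z) = (\<Sum>x\<in>V. b x * mv V M a x)"
  proof -
    have "(\<Sum>x\<in>V. \<Sum>z\<in>V. a x * M x z * b z) = (\<Sum>z\<in>V. \<Sum>x\<in>V. a x * M x z * b z)"
      by (rule sum.swap)
    also have "\<dots> = (\<Sum>z\<in>V. b z * mv V M a z)"
      unfolding mv_def sum_distrib_left
      by (intro sum.cong refl) (use sym in \<open>auto simp: algebra_simps\<close>)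
    finally show ?thesis .
  qed
  have s2: "(\<Sum>x\<in>V. \<Sum>z\<in>V. b x * M x z * a z) = (\<Sum>x\<in>V. b x * mv V M a x)"
    unfolding mv_def sum_distrib_left by (intro sum.cong refl) (auto simp: algebra_simps)
  have "qf V M (\<lambda>x. a x + t * b x) = qf V M a + t * (\<Sum>x\<in>V. \<Sum>z\<in>V. a x * M x z * b z)
     + t * (\<Sum>x\<in>V. \<Sum>z\<in>V. b x * M x z * a z) + t\<^sup>2 * qf V M b"
    unfolding qf_def sum_distrib_left power2_eq_square sum.distrib[symmetric]
    by (intro sum.cong refl) (simp add: algebra_simps)
  then show ?thesis using s s2 by simp
qed

lemma nsq_expand:
  "nsq V (\<lambda>x. a x + t * b x) = nsq V a + 2 * t * ip V a b + t\<^sup>2 * nsq V b"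
  unfolding nsq_def ip_def sum_distrib_left power2_eq_square sum.distrib[symmetric]
  by (intro sum.cong refl) (simp add: algebra_simps)

lemma quad_nonneg_imp:
  fixes N R :: real
  assumes "\<forall>t. 2 * t * N + t\<^sup>2 * R \<ge> 0" "N \<ge> 0"
  shows "N = 0"
proof (rule ccontr)
  assume "N \<noteq> 0"
  then have N: "N > 0" using assms(2) by simp
  define s where "s = N / (\<bar>R\<bar> + 1)"
  have s: "s > 0" using N by (simp add: s_def)
  have "s * \<bar>R\<bar> < N" unfolding s_def using N
    by (simp add: field_simps) 
  have "2 * (-s) * N + (-s)\<^sup>2 * R \<le> -2 * s * N + s\<^sup>2 * \<bar>R\<bar>"
    by (simp add: power2_eq_square) (metis abs_ge_self mult_left_mono zero_le_mult_iff s less_le mult.assoc)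
  also have "\<dots> = s * (s * \<bar>R\<bar> - 2 * N)" by (simp add: algebra_simps power2_eq_square)
  also have "\<dots> < 0" using s \<open>s * \<bar>R\<bar> < N\<close> N by (simp add: mult_pos_neg)
  finally show False using assms(1) by (metis not_le)
qed


lemma qf_cong: "(\<And>x. x \<in> V \<Longrightarrow> y x = y' x) \<Longrightarrow> qf V M y = qf V M y'"
  unfolding qf_def by (intro sum.cong refl) auto
lemma nsq_cong: "(\<And>x. x \<in> V \<Longrightarrow> y x = y' x) \<Longrightarrow> nsq V y = nsq V y'"
  unfolding nsq_def by (intro sum.cong refl) auto
lemma ip_cong: "(\<And>x. x \<in> V \<Longrightarrow> y x = y' x) \<Longrightarrow> ip V w y = ip V w y'"
  unfolding ip_def by (intro sum.cong refl) auto
lemma qf_scale: "qf V M (\<lambda>x. c * y x) = c\<^sup>2 * qf V M y"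
  unfolding qf_def sum_distrib_left power2_eq_square by (intro sum.cong refl) (simp add: algebra_simps)
lemma nsq_scale: "nsq V (\<lambda>x. c * y x) = c\<^sup>2 * nsq V y"
  unfolding nsq_def sum_distrib_left by (intro sum.cong refl) (simp add: algebra_simps power2_eq_square)
lemma ip_scale: "ip V w (\<lambda>x. c * y x) = c * ip V w y"
  unfolding ip_def sum_distrib_left by (intro sum.cong refl) (simp add: algebra_simps)
lemma ip_add: "ip V w (\<lambda>x. a x + t * b x) = ip V w a + t * ip V w b"
  unfolding ip_def sum_distrib_left sum.distrib[symmetric] by (intro sum.cong refl) (simp add: algebra_simps)
lemma nsq_nonneg: "nsq V y \<ge> 0" unfolding nsq_def by (simp add: sum_nonneg)
lemma nsq_zero: "finite V \<Longrightarrow> nsq V y = 0 \<Longrightarrow> x \<in> V \<Longrightarrow> y x = 0"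
  unfolding nsq_def using sum_nonneg_eq_0_iff[of V "\<lambda>x. (y x)\<^sup>2"] by auto

lemma var_min:
  fixes V :: "'v set" and M :: "'v \<Rightarrow> 'v \<Rightarrow> real"
  assumes fin: "finite V" and sym: "\<forall>x\<in>V. \<forall>z\<in>V. M x z = M z x"
    and Mw: "\<forall>x\<in>V. mv V M w x = 0"
    and z0: "ip V w z0 = 0" "\<exists>x\<in>V. z0 x \<noteq> 0"
  shows "\<exists>y0 mu0. (\<exists>x\<in>V. y0 x \<noteq> 0) \<and> ip V w y0 = 0 \<and> (\<forall>x\<in>V. mv V M y0 x = mu0 * y0 x) \<and> mu0 = qf V M y0
     \<and> (\<forall>y. ip V w y = 0 \<longrightarrow> qf V M y \<ge> mu0 * nsq V y)"
proof -
  define K where "K = {y::'v\<Rightarrow>real. (\<forall>x. y x * (if x \<in> V then 0 else 1) = 0) \<and> ip V w y = 0 \<and> nsq V y = 1}"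
  define B where "B = (\<lambda>x::'v. if x \<in> V then {-1..1::real} else {0})"
  have cB: "compact (Pi\<^sub>E UNIV B)"
  proof -
    have "compactin (product_topology (\<lambda>i. euclidean) UNIV) (Pi\<^sub>E UNIV B)"
      by (subst compactin_PiE) (auto simp: B_def)
    then show ?thesis by (simp add: euclidean_product_topology)
  qed
  have KB: "K \<subseteq> Pi\<^sub>E UNIV B"
  proof
    fix y assume y: "y \<in> K"
    have "y x \<in> B x" for x
    proof (cases "x \<in> V")
      case True
      have "(y x)\<^sup>2 \<le> nsq V y" unfolding nsq_def
        by (rule member_le_sum) (use True fin in auto)
      then have "(y x)\<^sup>2 \<le> 1" using y by (simp add: K_def)
      then have "\<bar>y x\<bar> \<le> 1" by (simp add: abs_square_le_1)
      then have "-1 \<le> y x" "y x \<le> 1" by linarith+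
      then show ?thesis using True by (simp add: B_def)
    next
      case False
      have "y x * (if x \<in> V then 0 else 1) = 0" using y unfolding K_def by blast
      then show ?thesis using False by (simp add: B_def)
    qed
    then show "y \<in> Pi\<^sub>E UNIV B" by auto
  qed
  have clK: "closed K" unfolding K_def ip_def nsq_def
    apply (intro closed_Collect_conj closed_Collect_all closed_Collect_eq)
    apply (intro continuous_intros continuous_on_product_coordinates)+
    done
  have cK: "compact K"
  proof -
    have "compact (Pi\<^sub>E UNIV B \<inter> K)" using cB clK by blast
    moreover have "Pi\<^sub>E UNIV B \<inter> K = K" using KB by blast
    ultimately show ?thesis by simp
  qed
  have nz0: "nsq V z0 > 0"
  proof -
    obtain x where "x \<in> V" "z0 x \<noteq> 0" using z0 by blast
    then show ?thesis using nsq_zero[OF fin, of z0 x] nsq_nonneg[of V z0] by linarith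
  qed
  define z1 where "z1 = (\<lambda>x. if x \<in> V then (1 / sqrt (nsq V z0)) * z0 x else 0)"
  have "z1 \<in> K"
  proof -
    have "ip V w z1 = ip V w (\<lambda>x. (1 / sqrt (nsq V z0)) * z0 x)" by (rule ip_cong) (simp add: z1_def)
    also have "\<dots> = 0" using ip_scale[of V w "1 / sqrt (nsq V z0)" z0] z0 by simp
    finally have 1: "ip V w z1 = 0" .
    have "nsq V z1 = nsq V (\<lambda>x. (1 / sqrt (nsq V z0)) * z0 x)" by (rule nsq_cong) (simp add: z1_def)
    also have "\<dots> = 1" using nsq_scale[of V "1 / sqrt (nsq V z0)" z0] nz0 by (simp add: power_divide)
    finally show ?thesis using 1 by (simp add: K_def z1_def)
  qed
  then have Kne: "K \<noteq> {}" by blast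
  have cont: "continuous_on K (qf V M)"
  proof -
    have "continuous_on UNIV (qf V M)" unfolding qf_def
      by (intro continuous_intros continuous_on_product_coordinates)
    then show ?thesis by (rule continuous_on_subset) simp
  qed
  obtain y0 where y0K: "y0 \<in> K" and y0min: "\<And>y. y \<in> K \<Longrightarrow> qf V M y0 \<le> qf V M y"
    using continuous_attains_inf[OF cK Kne cont] by blast
  define mu0 where "mu0 = qf V M y0"
  have y0: "ip V w y0 = 0" "nsq V y0 = 1" using y0K by (auto simp: K_def)
  have bound: "qf V M y \<ge> mu0 * nsq V y" if yw: "ip V w y = 0" for y
  proof (cases "nsq V y = 0")
    case True
    then have "qf V M y = qf V M (\<lambda>x. 0 * y x)" by (intro qf_cong) (simp add: nsq_zero[OF fin])
    then show ?thesis using True qf_scale[of V M 0 y] by simp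
  next
    case False
    then have ny: "nsq V y > 0" using nsq_nonneg[of V y] by linarith
    define c where "c = 1 / sqrt (nsq V y)"
    define y' where "y' = (\<lambda>x. if x \<in> V then c * y x else 0)"
    have c2: "c\<^sup>2 = 1 / nsq V y" using ny by (simp add: c_def power_divide)
    have "ip V w y' = ip V w (\<lambda>x. c * y x)" by (rule ip_cong) (simp add: y'_def)
    then have 1: "ip V w y' = 0" by (simp add: ip_scale yw)
    have "nsq V y' = nsq V (\<lambda>x. c * y x)" by (rule nsq_cong) (simp add: y'_def)
    then have 2: "nsq V y' = 1" using ny c2 by (simp add: nsq_scale)
    have "y' \<in> K" using 1 2 by (simp add: K_def y'_def)
    then have "mu0 \<le> qf V M y'" using y0min by (simp add: mu0_def)
    also have "qf V M y' = qf V M (\<lambda>x. c * y x)" by (rule qf_cong) (simp add: y'_def)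
    also have "\<dots> = qf V M y / nsq V y" using c2 by (simp add: qf_scale)
    finally show ?thesis using ny by (simp add: field_simps)
  qed
  define h where "h = (\<lambda>x. mv V M y0 x - mu0 * y0 x)"
  have iph: "ip V w h = 0"
  proof -
    have "ip V w (mv V M y0) = (\<Sum>x\<in>V. \<Sum>z\<in>V. w x * M x z * y0 z)"
      unfolding ip_def mv_def sum_distrib_left by (simp add: algebra_simps)
    also have "\<dots> = (\<Sum>z\<in>V. \<Sum>x\<in>V. w x * M x z * y0 z)" by (rule sum.swap)
    also have "\<dots> = (\<Sum>z\<in>V. y0 z * mv V M w z)"
      unfolding mv_def sum_distrib_left
      by (intro sum.cong refl) (use sym in \<open>auto simp: algebra_simps\<close>)
    also have "\<dots> = 0" using Mw by simp
    finally have "ip V w (mv V M y0) = 0" .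
    then show ?thesis unfolding h_def using ip_add[of V w "mv V M y0" "-mu0" y0] y0 by simp
  qed
  have key: "(\<Sum>x\<in>V. h x * mv V M y0 x) - mu0 * ip V y0 h = nsq V h"
    unfolding nsq_def ip_def sum_distrib_left sum_subtractf[symmetric] h_def power2_eq_square
    by (intro sum.cong refl) (simp add: algebra_simps)
  have "\<forall>t. 2 * t * nsq V h + t\<^sup>2 * (qf V M h - mu0 * nsq V h) \<ge> 0"
  proof
    fix t
    have "ip V w (\<lambda>x. y0 x + t * h x) = 0" using ip_add[of V w y0 t h] iph y0 by simp
    then have "qf V M (\<lambda>x. y0 x + t * h x) \<ge> mu0 * nsq V (\<lambda>x. y0 x + t * h x)" by (rule bound)
    then have "mu0 + 2 * t * (\<Sum>x\<in>V. h x * mv V M y0 x) + t\<^sup>2 * qf V M h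
        \<ge> mu0 * (1 + 2 * t * ip V y0 h + t\<^sup>2 * nsq V h)"
      unfolding qf_expand[OF sym] nsq_expand y0 mu0_def by simp
    then have "2 * t * ((\<Sum>x\<in>V. h x * mv V M y0 x) - mu0 * ip V y0 h) + t\<^sup>2 * (qf V M h - mu0 * nsq V h) \<ge> 0"
      by (simp add: algebra_simps)
    then show "2 * t * nsq V h + t\<^sup>2 * (qf V M h - mu0 * nsq V h) \<ge> 0" using key by simp
  qed
  then have "nsq V h = 0" using quad_nonneg_imp nsq_nonneg by blast
  then have eig: "\<forall>x\<in>V. mv V M y0 x = mu0 * y0 x" using nsq_zero[OF fin, of h] by (simp add: h_def)
  have "\<exists>x\<in>V. y0 x \<noteq> 0"
  proof (rule ccontr)
    assume "\<not> ?thesis"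
    then have "nsq V y0 = 0" by (simp add: nsq_def)
    then show False using y0 by simp
  qed
  then show ?thesis using eig bound mu0_def y0 by blast
qed


lemma gram:
  fixes g :: "'v \<Rightarrow> 'e \<Rightarrow> real" and y :: "'v \<Rightarrow> real"
  assumes "finite V" "finite F"
  shows "(\<Sum>x\<in>V. \<Sum>z\<in>V. y x * (\<Sum>e\<in>F. g x e * g z e) * y z) = (\<Sum>e\<in>F. (\<Sum>x\<in>V. g x e * y x)\<^sup>2)"
proof -
  have "(\<Sum>e\<in>F. (\<Sum>x\<in>V. g x e * y x)\<^sup>2) = (\<Sum>e\<in>F. \<Sum>x\<in>V. \<Sum>z\<in>V. (g x e * y x) * (g z e * y z))"
    by (intro sum.cong refl) (simp add: power2_eq_square sum_product)
  also have "\<dots> = (\<Sum>x\<in>V. \<Sum>e\<in>F. \<Sum>z\<in>V. (g x e * y x) * (g z e * y z))" by (rule sum.swap)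
  also have "\<dots> = (\<Sum>x\<in>V. \<Sum>z\<in>V. \<Sum>e\<in>F. (g x e * y x) * (g z e * y z))"
    by (intro sum.cong refl) (rule sum.swap)
  also have "\<dots> = (\<Sum>x\<in>V. \<Sum>z\<in>V. y x * (\<Sum>e\<in>F. g x e * g z e) * y z)"
    unfolding sum_distrib_left sum_distrib_right by (intro sum.cong refl) (simp add: algebra_simps)
  finally show ?thesis by simp
qed

lemma qf_mv: "qf V M v = (\<Sum>x\<in>V. v x * mv V M v x)"
  unfolding qf_def mv_def sum_distrib_left by (intro sum.cong refl) (simp add: algebra_simps)

lemma eig_qf: "\<forall>x\<in>V. mv V M v x = lam * v x \<Longrightarrow> qf V M v = lam * nsq V v"
  unfolding qf_mv nsq_def sum_distrib_left by (intro sum.cong refl) (simp add: power2_eq_square)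

lemma eig_orth:
  assumes sym: "\<forall>x\<in>V. \<forall>z\<in>V. M x z = M z x" and Mw: "\<forall>x\<in>V. mv V M w x = 0"
    and ev: "\<forall>x\<in>V. mv V M v x = lam * v x" and lam: "lam \<noteq> 0"
  shows "ip V w v = 0"
proof -
  have "lam * ip V w v = (\<Sum>x\<in>V. w x * mv V M v x)"
    unfolding ip_def sum_distrib_left using ev by (intro sum.cong refl) simp
  also have "\<dots> = (\<Sum>x\<in>V. \<Sum>z\<in>V. w x * M x z * v z)"
    unfolding mv_def sum_distrib_left by (simp add: algebra_simps)
  also have "\<dots> = (\<Sum>z\<in>V. \<Sum>x\<in>V. w x * M x z * v z)" by (rule sum.swap)
  also have "\<dots> = (\<Sum>z\<in>V. v z * mv V M w z)"
    unfolding mv_def sum_distrib_left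
    by (intro sum.cong refl) (use sym in \<open>auto simp: algebra_simps\<close>)
  also have "\<dots> = 0" using Mw by simp
  finally show ?thesis using lam by simp
qed

definition Dq :: "(nat \<times> nat) set \<Rightarrow> (aedge \<Rightarrow> real) \<Rightarrow> (nat \<Rightarrow> real) \<Rightarrow> real" where
  "Dq E mu y = (\<Sum>(k,l)\<in>E. (mu (Ec k l))\<^sup>2 * (y k - y l)\<^sup>2)"

lemma Dq_nonneg: "Dq E mu y \<ge> 0"
  unfolding Dq_def by (intro sum_nonneg) (auto simp: case_prod_beta)

lemma incAc_sum:
  assumes "fst e < n" "snd e < n"
  shows "(\<Sum>i<n. incAc mu i e * y i) = mu (Ec (fst e) (snd e)) * (y (fst e) - y (snd e))"
proof -
  have "(\<Sum>i<n. incAc mu i e * y i) = mu (Ec (fst e) (snd e)) *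
     ((\<Sum>i<n. if i = fst e then y i else 0) - (\<Sum>i<n. if i = snd e then y i else 0))"
    unfolding incAc_def sum_distrib_left sum_subtractf[symmetric]
    by (intro sum.cong refl) (simp add: algebra_simps)
  also have "\<dots> = mu (Ec (fst e) (snd e)) * (y (fst e) - y (snd e))"
    using assms by (simp add: sum.delta)
  finally show ?thesis .
qed

lemma qf_lapL:
  assumes E_sub: "E \<subseteq> {..<n} \<times> {..<n}"
  shows "qf {..<n} (lapL E mu) y = Dq E mu y"
proof -
  have fE: "finite E" using E_sub finite_subset by blast
  have "qf {..<n} (lapL E mu) y = (\<Sum>e\<in>E. (\<Sum>i<n. incAc mu i e * y i)\<^sup>2)"
    unfolding qf_def lapL_def by (rule gram) (use fE in auto)
  also have "\<dots> = (\<Sum>e\<in>E. (mu (Ec (fst e) (snd e)))\<^sup>2 * (y (fst e) - y (snd e))\<^sup>2)"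
    by (intro sum.cong refl) (use E_sub in \<open>auto simp: incAc_sum power_mult_distrib\<close>)
  finally show ?thesis unfolding Dq_def by (simp add: case_prod_beta)
qed

lemma Dq_shift: "Dq E mu (\<lambda>i. y i - c) = Dq E mu y"
  unfolding Dq_def by simp

lemma lapL_sym: "lapL E mu i k = lapL E mu k i"
  unfolding lapL_def by (simp add: mult.commute)

lemma lapL_one:
  assumes E_sub: "E \<subseteq> {..<n} \<times> {..<n}" and i: "i < n"
  shows "mv {..<n} (lapL E mu) (\<lambda>_. 1) i = 0"
proof -
  have "mv {..<n} (lapL E mu) (\<lambda>_. 1) i = (\<Sum>e\<in>E. incAc mu i e * (\<Sum>k<n. incAc mu k e * 1))"
    unfolding mv_def lapL_def sum_distrib_left by (simp add: sum.swap[of _ E])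
  also have "\<dots> = 0"
  proof (intro sum.neutral ballI)
    fix e assume "e \<in> E"
    then have "fst e < n" "snd e < n" using E_sub by auto
    from incAc_sum[OF this, of mu "\<lambda>_. 1"]
    show "incAc mu i e * (\<Sum>k<n. incAc mu k e * 1) = 0" by simp
  qed
  finally show ?thesis .
qed


lemma conn_const:
  assumes conn: "graph_connected n E" and eq: "\<forall>(k,l)\<in>E. y k = y l" and ij: "i < n" "j < n"
  shows "y i = y j"
proof -
  have "(\<lambda>a b. (a, b) \<in> E \<or> (b, a) \<in> E)\<^sup>*\<^sup>* i j" using conn ij unfolding graph_connected_def by blast
  then show ?thesis
  proof (induction rule: rtranclp_induct)
    case base then show ?case by simp
  next
    case (step b c)
    then show ?case using eq by auto
  qed
qed

lemma Dq_zero: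
  assumes fE: "finite E" and pos: "\<forall>(k,l)\<in>E. mu (Ec k l) > 0" and D0: "Dq E mu y = 0"
  shows "\<forall>(k,l)\<in>E. y k = y l"
proof -
  have "\<forall>e\<in>E. (\<lambda>(k,l). (mu (Ec k l))\<^sup>2 * (y k - y l)\<^sup>2) e = 0"
    using D0 fE unfolding Dq_def by (subst sum_nonneg_eq_0_iff[symmetric]) (auto simp: case_prod_beta)
  then show ?thesis using pos by fastforce
qed

lemma L_facts:
  fixes n :: nat and E :: "(nat \<times> nat) set" and mu :: "aedge \<Rightarrow> real"
  assumes n2: "2 \<le> n" and E_sub: "E \<subseteq> {..<n} \<times> {..<n}" and conn: "graph_connected n E"
    and pos: "\<forall>(k,l)\<in>E. mu (Ec k l) > 0"
  shows "lambda_min_pos {..<n} (lapL E mu) > 0 \<and>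
    (\<forall>y. Dq E mu y \<ge> lambda_min_pos {..<n} (lapL E mu) * (\<Sum>i<n. (y i - (\<Sum>k<n. y k) / n)\<^sup>2))"
proof -
  define V where "V = {..<n}"
  define M where "M = lapL E mu"
  have fE: "finite E" using E_sub finite_subset by blast
  have finV: "finite V" by (simp add: V_def)
  have sym: "\<forall>x\<in>V. \<forall>z\<in>V. M x z = M z x" by (simp add: M_def lapL_sym)
  have Mw: "\<forall>x\<in>V. mv V M (\<lambda>_. 1) x = 0" using lapL_one[OF E_sub] by (simp add: M_def V_def)
  define z0 where "z0 = (\<lambda>i::nat. (if i = 0 then 1 else 0) - (if i = 1 then 1 else (0::real)))"
  have "ip V (\<lambda>_. 1) z0 = 0" using n2
    unfolding ip_def z0_def V_def by (simp add: sum_subtractf sum.delta)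
  moreover have "\<exists>x\<in>V. z0 x \<noteq> 0" using n2 by (auto simp: V_def z0_def intro!: bexI[of _ 0])
  ultimately obtain y0 mu0 where y0nz: "\<exists>x\<in>V. y0 x \<noteq> 0" and y0w: "ip V (\<lambda>_. 1) y0 = 0"
    and ev: "\<forall>x\<in>V. mv V M y0 x = mu0 * y0 x" and mu0: "mu0 = qf V M y0"
    and bound: "\<forall>y. ip V (\<lambda>_. 1) y = 0 \<longrightarrow> qf V M y \<ge> mu0 * nsq V y"
    using var_min[OF finV sym Mw] by blast
  have qfD: "qf V M y = Dq E mu y" for y unfolding V_def M_def by (rule qf_lapL[OF E_sub])
  have mu0nz: "mu0 \<noteq> 0"
  proof
    assume "mu0 = 0"
    then have "Dq E mu y0 = 0" using mu0 qfD by simp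
    then have edg: "\<forall>(k,l)\<in>E. y0 k = y0 l" by (rule Dq_zero[OF fE pos])
    have c0: "\<forall>i\<in>V. y0 i = y0 0"
    proof
      fix i assume "i \<in> V"
      then show "y0 i = y0 0" using conn_const[OF conn edg, of i 0] n2 by (simp add: V_def)
    qed
    obtain a where c: "\<forall>i\<in>V. y0 i = a" using c0 by blast
    have "ip V (\<lambda>_. 1) y0 = (\<Sum>i\<in>V. a)" unfolding ip_def using c by simp
    then have "ip V (\<lambda>_. 1) y0 = n * a" by (simp add: V_def)
    then have "a = 0" using y0w n2 by simp
    then show False using c y0nz by auto
  qed
  define SL where "SL = {lam. is_eigenvalue V M lam \<and> lam \<noteq> 0}"
  have "is_eigenvalue V M mu0" unfolding is_eigenvalue_def using y0nz ev by (auto simp: mv_def)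
  then have mu0SL: "mu0 \<in> SL" using mu0nz by (simp add: SL_def)
  have finSL: "finite SL" using finite_eig[OF finV, of M] by (rule finite_subset[rotated]) (auto simp: SL_def)
  have lamdef: "lambda_min_pos {..<n} (lapL E mu) = Min SL" by (simp add: lambda_min_pos_def SL_def V_def M_def)
  have le: "Min SL \<le> mu0" using finSL mu0SL by simp
  have "Min SL \<in> SL" using finSL mu0SL by (intro Min_in) auto
  then obtain v where vnz: "\<exists>x\<in>V. v x \<noteq> 0" and vev: "\<forall>x\<in>V. mv V M v x = Min SL * v x"
    and lnz: "Min SL \<noteq> 0" unfolding SL_def is_eigenvalue_def mv_def by blast
  have "qf V M v = Min SL * nsq V v" by (rule eig_qf[OF vev])
  moreover have "qf V M v \<ge> 0" using qfD Dq_nonneg by simp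
  moreover have "nsq V v > 0"
  proof -
    obtain x where "x \<in> V" "v x \<noteq> 0" using vnz by blast
    then show ?thesis using nsq_zero[OF finV, of v x] nsq_nonneg[of V v] by linarith
  qed
  ultimately have "Min SL * nsq V v \<ge> 0" "nsq V v > 0" by auto
  then have "Min SL \<ge> 0" by (simp add: zero_le_mult_iff)
  then have lpos: "Min SL > 0" using lnz by simp
  have poinc: "Dq E mu y \<ge> Min SL * (\<Sum>i<n. (y i - (\<Sum>k<n. y k) / n)\<^sup>2)" for y
  proof -
    define c where "c = (\<Sum>k<n. y k) / n"
    define y' where "y' = (\<lambda>i. y i - c)"
    have "ip V (\<lambda>_. 1) y' = (\<Sum>k<n. y k) - n * c" unfolding ip_def y'_def V_def
      by (simp add: sum_subtractf)
    also have "\<dots> = 0" using n2 by (simp add: c_def)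
    finally have "qf V M y' \<ge> mu0 * nsq V y'" using bound by blast
    moreover have "mu0 * nsq V y' \<ge> Min SL * nsq V y'" using le nsq_nonneg[of V y'] by (rule mult_right_mono)
    moreover have "qf V M y' = Dq E mu y" using qfD Dq_shift by (simp add: y'_def)
    moreover have "nsq V y' = (\<Sum>i<n. (y i - c)\<^sup>2)" by (simp add: nsq_def V_def y'_def)
    ultimately show ?thesis by (simp add: c_def)
  qed
  show ?thesis using lpos poinc lamdef by simp
qed


lemma KI_alg:
  fixes n m :: nat and a :: "nat \<Rightarrow> real" and z L q :: "nat \<Rightarrow> nat \<Rightarrow> real" and s :: "nat \<Rightarrow> real"
    and lam sig kap Dv :: real
  assumes n: "n > 0" and lam: "lam > 0"
    and s_pos: "\<forall>i<n. s i > 0" and s_le: "\<forall>i<n. s i \<le> sig"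
    and L_pos: "\<forall>i<n. \<forall>j<m. L i j > 0"
    and kap_ge: "\<forall>i<n. kap \<ge> 1 + (\<Sum>j<m. L i j) / s i"
    and q: "\<forall>i<n. \<forall>j<m. q i j = lam / (sig * (1 + (\<Sum>j<m. L i j) / s i)) * L i j"
    and poinc: "Dv \<ge> lam * (\<Sum>i<n. (a i - (\<Sum>k<n. a k) / n)\<^sup>2)"
    and cons: "(\<Sum>i<n. s i * a i) + (\<Sum>i<n. \<Sum>j<m. L i j * z i j) = 0"
  shows "lam / (2 * sig * kap) * ((\<Sum>i<n. s i * (a i)\<^sup>2) + (\<Sum>i<n. \<Sum>j<m. L i j * (z i j)\<^sup>2))
      \<le> Dv + (\<Sum>i<n. \<Sum>j<m. q i j * (a i - z i j)\<^sup>2)"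
proof -
  define c where "c = (\<Sum>k<n. a k) / n"
  define N where "N = (\<Sum>i<n. s i * (a i)\<^sup>2) + (\<Sum>i<n. \<Sum>j<m. L i j * (z i j)\<^sup>2)"
  define K where "K = 2 * sig * kap"
  have sig_pos: "sig > 0" using s_pos s_le n by force
  have kap_pos: "kap > 0"
  proof -
    have "(\<Sum>j<m. L 0 j) / s 0 \<ge> 0" using L_pos s_pos n by (intro divide_nonneg_pos sum_nonneg) (auto intro: less_imp_le)
    then show ?thesis using kap_ge n by force
  qed
  have Kpos: "K > 0" using sig_pos kap_pos by (simp add: K_def)
  have step_a: "N \<le> (\<Sum>i<n. s i * (a i - c)\<^sup>2 + (\<Sum>j<m. L i j * (z i j - c)\<^sup>2))"
  proof -
    have per: "s i * (a i - c)\<^sup>2 + (\<Sum>j<m. L i j * (z i j - c)\<^sup>2)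
      = (s i * (a i)\<^sup>2 + (\<Sum>j<m. L i j * (z i j)\<^sup>2)) - 2 * c * (s i * a i + (\<Sum>j<m. L i j * z i j))
        + c\<^sup>2 * (s i + (\<Sum>j<m. L i j))" for i
    proof -
      have "(\<Sum>j<m. L i j * (z i j - c)\<^sup>2) = (\<Sum>j<m. L i j * (z i j)\<^sup>2 - 2 * c * (L i j * z i j) + c\<^sup>2 * L i j)"
        by (intro sum.cong refl) (simp add: power2_diff algebra_simps)
      also have "\<dots> = (\<Sum>j<m. L i j * (z i j)\<^sup>2) - 2 * c * (\<Sum>j<m. L i j * z i j) + c\<^sup>2 * (\<Sum>j<m. L i j)"
        by (simp add: sum.distrib sum_subtractf sum_distrib_left)
      finally show ?thesis by (simp add: power2_diff algebra_simps)
    qed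
    have "(\<Sum>i<n. s i * (a i - c)\<^sup>2 + (\<Sum>j<m. L i j * (z i j - c)\<^sup>2))
       = N - 2 * c * ((\<Sum>i<n. s i * a i) + (\<Sum>i<n. \<Sum>j<m. L i j * z i j))
         + c\<^sup>2 * (\<Sum>i<n. s i + (\<Sum>j<m. L i j))"
      unfolding per N_def by (simp add: sum.distrib sum_subtractf sum_distrib_left sum_distrib_right algebra_simps)
    also have "\<dots> = N + c\<^sup>2 * (\<Sum>i<n. s i + (\<Sum>j<m. L i j))" using cons by simp
    also have "\<dots> \<ge> N"
    proof -
      have "(\<Sum>i<n. s i + (\<Sum>j<m. L i j)) \<ge> 0"
        using s_pos L_pos by (intro sum_nonneg add_nonneg_nonneg) (auto intro: less_imp_le)
      then show ?thesis by simp
    qed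
    finally show ?thesis .
  qed
  have step_b: "s i * (a i - c)\<^sup>2 + (\<Sum>j<m. L i j * (z i j - c)\<^sup>2)
      \<le> K * (a i - c)\<^sup>2 + (\<Sum>j<m. 2 * L i j * (z i j - a i)\<^sup>2)" if i: "i < n" for i
  proof -
    have "(\<Sum>j<m. L i j * (z i j - c)\<^sup>2) \<le> (\<Sum>j<m. 2 * L i j * (z i j - a i)\<^sup>2 + 2 * L i j * (a i - c)\<^sup>2)"
    proof (rule sum_mono)
      fix j assume "j \<in> {..<m}"
      then have Lp: "L i j \<ge> 0" using L_pos i by (simp add: less_imp_le)
      have "(z i j - c)\<^sup>2 \<le> 2 * (z i j - a i)\<^sup>2 + 2 * (a i - c)\<^sup>2"
      proof -
        have "2 * (z i j - a i)\<^sup>2 + 2 * (a i - c)\<^sup>2 - (z i j - c)\<^sup>2 = (z i j - 2 * a i + c)\<^sup>2"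
          by (simp add: power2_eq_square algebra_simps)
        moreover have "(z i j - 2 * a i + c)\<^sup>2 \<ge> 0" by simp
        ultimately show ?thesis by linarith
      qed
      then have "L i j * (z i j - c)\<^sup>2 \<le> L i j * (2 * (z i j - a i)\<^sup>2 + 2 * (a i - c)\<^sup>2)"
        using Lp by (rule mult_left_mono)
      then show "L i j * (z i j - c)\<^sup>2 \<le> 2 * L i j * (z i j - a i)\<^sup>2 + 2 * L i j * (a i - c)\<^sup>2"
        by (simp add: algebra_simps)
    qed
    also have "\<dots> = (\<Sum>j<m. 2 * L i j * (z i j - a i)\<^sup>2) + 2 * (\<Sum>j<m. L i j) * (a i - c)\<^sup>2"
      by (simp add: sum.distrib sum_distrib_left sum_distrib_right algebra_simps)
    finally have 1: "(\<Sum>j<m. L i j * (z i j - c)\<^sup>2) \<le> (\<Sum>j<m. 2 * L i j * (z i j - a i)\<^sup>2) + 2 * (\<Sum>j<m. L i j) * (a i - c)\<^sup>2" .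
    have sk: "s i * (1 + (\<Sum>j<m. L i j) / s i) = s i + (\<Sum>j<m. L i j)" proof -
      have "s i > 0" using s_pos i by simp
      then show ?thesis by (simp add: field_simps)
    qed
    have SLnn: "(\<Sum>j<m. L i j) \<ge> 0" using L_pos i by (intro sum_nonneg) (auto intro: less_imp_le)
    have "s i * (1 + (\<Sum>j<m. L i j) / s i) \<le> sig * kap"
      using s_le kap_ge s_pos i SLnn sig_pos by (intro mult_mono) (auto intro: less_imp_le)
    moreover have "s i > 0" using s_pos i by simp
    ultimately have 2: "s i + 2 * (\<Sum>j<m. L i j) \<le> K" using sk by (simp add: K_def)
    have "s i * (a i - c)\<^sup>2 + 2 * (\<Sum>j<m. L i j) * (a i - c)\<^sup>2 = (s i + 2 * (\<Sum>j<m. L i j)) * (a i - c)\<^sup>2"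
      by (simp add: algebra_simps)
    also have "\<dots> \<le> K * (a i - c)\<^sup>2" using 2 by (rule mult_right_mono) simp
    finally show ?thesis using 1 by linarith
  qed
  have step_d: "2 * L i j * (z i j - a i)\<^sup>2 \<le> K / lam * (q i j * (a i - z i j)\<^sup>2)" if i: "i < n" and j: "j < m" for i j
  proof -
    define ki where "ki = 1 + (\<Sum>j<m. L i j) / s i"
    have SLnn: "(\<Sum>j<m. L i j) \<ge> 0" using L_pos i by (intro sum_nonneg) (auto intro: less_imp_le)
    have si: "s i > 0" using s_pos i by simp
    have ki1: "ki \<ge> 1" using SLnn si by (simp add: ki_def)
    have kk: "kap \<ge> ki" using kap_ge i by (simp add: ki_def)
    have "K / lam * q i j = 2 * (kap / ki) * L i j"
    proof -
      have qij: "q i j = lam / (sig * ki) * L i j" using q i j by (simp add: ki_def)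
      show ?thesis unfolding qij K_def using lam sig_pos ki1 by (simp add: field_simps)
    qed
    moreover have "kap / ki \<ge> 1" using kk ki1 by simp
    moreover have "L i j > 0" using L_pos i j by simp
    ultimately have "K / lam * q i j \<ge> 2 * L i j"
    proof -
      assume e: "K / lam * q i j = 2 * (kap / ki) * L i j" and k: "kap / ki \<ge> 1" and l: "L i j > 0"
      have "2 * L i j * 1 \<le> 2 * L i j * (kap / ki)" using k l by (intro mult_left_mono) auto
      then show ?thesis using e by (simp add: algebra_simps)
    qed
    then have "2 * L i j * (z i j - a i)\<^sup>2 \<le> K / lam * q i j * (z i j - a i)\<^sup>2"
      by (rule mult_right_mono) simp
    then show ?thesis by (simp add: power2_commute mult.assoc)
  qed
  have "N \<le> (\<Sum>i<n. K * (a i - c)\<^sup>2 + (\<Sum>j<m. 2 * L i j * (z i j - a i)\<^sup>2))"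
    using step_a step_b by (meson order_trans sum_mono lessThan_iff)
  also have "\<dots> = K * (\<Sum>i<n. (a i - c)\<^sup>2) + (\<Sum>i<n. \<Sum>j<m. 2 * L i j * (z i j - a i)\<^sup>2)"
    by (simp add: sum.distrib sum_distrib_left)
  also have "\<dots> \<le> K / lam * Dv + (\<Sum>i<n. \<Sum>j<m. K / lam * (q i j * (a i - z i j)\<^sup>2))"
  proof (rule add_mono)
    have "lam * (\<Sum>i<n. (a i - c)\<^sup>2) \<le> Dv" using poinc by (simp add: c_def)
    then have "(\<Sum>i<n. (a i - c)\<^sup>2) \<le> Dv / lam" using lam by (simp add: field_simps)
    then have "K * (\<Sum>i<n. (a i - c)\<^sup>2) \<le> K * (Dv / lam)" using Kpos by (intro mult_left_mono) auto
    then show "K * (\<Sum>i<n. (a i - c)\<^sup>2) \<le> K / lam * Dv" by simp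
    show "(\<Sum>i<n. \<Sum>j<m. 2 * L i j * (z i j - a i)\<^sup>2) \<le> (\<Sum>i<n. \<Sum>j<m. K / lam * (q i j * (a i - z i j)\<^sup>2))"
      using step_d by (intro sum_mono) auto
  qed
  also have "\<dots> = K / lam * (Dv + (\<Sum>i<n. \<Sum>j<m. q i j * (a i - z i j)\<^sup>2))"
    by (simp add: sum_distrib_left distrib_left)
  finally have "N \<le> K / lam * (Dv + (\<Sum>i<n. \<Sum>j<m. q i j * (a i - z i j)\<^sup>2))" .
  then have "lam / K * N \<le> Dv + (\<Sum>i<n. \<Sum>j<m. q i j * (a i - z i j)\<^sup>2)"
    using Kpos lam by (simp add: field_simps)
  then show ?thesis by (simp add: K_def N_def)
qed


lemma aug_nodes_eq: "aug_nodes n m = Cn ` {..<n} \<union> (\<lambda>(i,j). Vn i j) ` ({..<n} \<times> {..<m})"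
  unfolding aug_nodes_def by auto

lemma finite_aug_nodes: "finite (aug_nodes n m)"
  unfolding aug_nodes_eq by simp

lemma sum_aug_nodes:
  "(\<Sum>x\<in>aug_nodes n m. f x) = (\<Sum>i<n. f (Cn i)) + (\<Sum>i<n. \<Sum>j<m. f (Vn i j))"
proof -
  have inj1: "inj_on Cn {..<n}" by (auto simp: inj_on_def)
  have inj2: "inj_on (\<lambda>(i,j). Vn i j) ({..<n} \<times> {..<m})" by (auto simp: inj_on_def)
  have "(\<Sum>x\<in>aug_nodes n m. f x) = (\<Sum>x\<in>Cn ` {..<n}. f x) + (\<Sum>x\<in>(\<lambda>(i,j). Vn i j) ` ({..<n} \<times> {..<m}). f x)"
    unfolding aug_nodes_eq by (rule sum.union_disjoint) auto
  also have "\<dots> = (\<Sum>i<n. f (Cn i)) + (\<Sum>p\<in>{..<n} \<times> {..<m}. f (case p of (i,j) \<Rightarrow> Vn i j))"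
    by (simp add: sum.reindex[OF inj1] sum.reindex[OF inj2] comp_def)
  also have "\<dots> = (\<Sum>i<n. f (Cn i)) + (\<Sum>i<n. \<Sum>j<m. f (Vn i j))"
    by (simp add: sum.cartesian_product case_prod_beta)
  finally show ?thesis .
qed

lemma aug_edges_eq: "aug_edges E n m = (\<lambda>(k, l). Ec k l) ` E \<union> (\<lambda>(i,j). Ev i j) ` ({..<n} \<times> {..<m})"
  unfolding aug_edges_def by auto

lemma sum_aug_edges:
  assumes "finite E"
  shows "(\<Sum>e\<in>aug_edges E n m. f e) = (\<Sum>(k,l)\<in>E. f (Ec k l)) + (\<Sum>i<n. \<Sum>j<m. f (Ev i j))"
proof -
  have inj1: "inj_on (\<lambda>(k, l). Ec k l) E" by (auto simp: inj_on_def)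
  have inj2: "inj_on (\<lambda>(i,j). Ev i j) ({..<n} \<times> {..<m})" by (auto simp: inj_on_def)
  have "(\<Sum>e\<in>aug_edges E n m. f e) = (\<Sum>e\<in>(\<lambda>(k, l). Ec k l) ` E. f e) + (\<Sum>e\<in>(\<lambda>(i,j). Ev i j) ` ({..<n} \<times> {..<m}). f e)"
    unfolding aug_edges_eq by (rule sum.union_disjoint) (use assms in auto)
  also have "\<dots> = (\<Sum>p\<in>E. f (case p of (k,l) \<Rightarrow> Ec k l)) + (\<Sum>p\<in>{..<n} \<times> {..<m}. f (case p of (i,j) \<Rightarrow> Ev i j))"
    by (simp add: sum.reindex[OF inj1] sum.reindex[OF inj2] comp_def)
  also have "\<dots> = (\<Sum>(k,l)\<in>E. f (Ec k l)) + (\<Sum>i<n. \<Sum>j<m. f (Ev i j))"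
    by (simp add: sum.cartesian_product case_prod_beta)
  finally show ?thesis .
qed

lemma incA_sum_Ec:
  assumes "k < n" "l < n"
  shows "(\<Sum>x\<in>aug_nodes n m. incA mu x (Ec k l) * y x) = mu (Ec k l) * (y (Cn k) - y (Cn l))"
proof -
  have "(\<Sum>x\<in>aug_nodes n m. incA mu x (Ec k l) * y x) = mu (Ec k l) *
     ((\<Sum>x\<in>aug_nodes n m. if x = Cn k then y x else 0) - (\<Sum>x\<in>aug_nodes n m. if x = Cn l then y x else 0))"
    unfolding sum_distrib_left sum_subtractf[symmetric]
    by (intro sum.cong refl) (simp add: algebra_simps)
  also have "\<dots> = mu (Ec k l) * (y (Cn k) - y (Cn l))"
    using assms finite_aug_nodes[of n m] by (simp add: sum.delta aug_nodes_def)
  finally show ?thesis .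
qed

lemma incA_sum_Ev:
  assumes "i < n" "j < m"
  shows "(\<Sum>x\<in>aug_nodes n m. incA mu x (Ev i j) * y x) = mu (Ev i j) * (y (Cn i) - y (Vn i j))"
proof -
  have "(\<Sum>x\<in>aug_nodes n m. incA mu x (Ev i j) * y x) = mu (Ev i j) *
     ((\<Sum>x\<in>aug_nodes n m. if x = Cn i then y x else 0) - (\<Sum>x\<in>aug_nodes n m. if x = Vn i j then y x else 0))"
    unfolding sum_distrib_left sum_subtractf[symmetric]
    by (intro sum.cong refl) (simp add: algebra_simps)
  also have "\<dots> = mu (Ev i j) * (y (Cn i) - y (Vn i j))"
    using assms finite_aug_nodes[of n m] by (simp add: sum.delta aug_nodes_def)
  finally show ?thesis .
qed

lemma incA_sum_one:
  assumes E_sub: "E \<subseteq> {..<n} \<times> {..<n}" and e: "e \<in> aug_edges E n m"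
  shows "(\<Sum>x\<in>aug_nodes n m. incA mu x e * 1) = 0"
proof -
  consider (c) k l where "(k,l) \<in> E" "e = Ec k l" | (v) i j where "i < n" "j < m" "e = Ev i j"
    using e unfolding aug_edges_def by auto
  then show ?thesis
  proof cases
    case c
    then have "k < n" "l < n" using E_sub by auto
    from incA_sum_Ec[OF this, where m=m and mu=mu and y="\<lambda>_. 1"] show ?thesis using c by simp
  next
    case v
    from incA_sum_Ev[OF v(1,2), where mu=mu and y="\<lambda>_. 1"] show ?thesis using v by simp
  qed
qed

lemma qf_Ltilde:
  fixes sigma :: "nat \<Rightarrow> real"
  assumes E_sub: "E \<subseteq> {..<n} \<times> {..<n}"
    and y_def: "y = (\<lambda>x. v x / sqrt (Sigma_diag sigma Lw x))"
  shows "qf (aug_nodes n m) (Ltilde E n m mu sigma Lw) v =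
    Dq E mu (\<lambda>i. y (Cn i)) + (\<Sum>i<n. \<Sum>j<m. (mu (Ev i j))\<^sup>2 * (y (Cn i) - y (Vn i j))\<^sup>2)"
proof -
  have fE: "finite E" using E_sub finite_subset by blast
  let ?V = "aug_nodes n m"
  have "qf ?V (Ltilde E n m mu sigma Lw) v = (\<Sum>x\<in>?V. \<Sum>z\<in>?V. y x * (\<Sum>e\<in>aug_edges E n m. incA mu x e * incA mu z e) * y z)"
    unfolding qf_def Ltilde_def AAT_def y_def by (intro sum.cong refl) (simp add: field_simps)
  also have "\<dots> = (\<Sum>e\<in>aug_edges E n m. (\<Sum>x\<in>?V. incA mu x e * y x)\<^sup>2)"
    by (rule gram) (use fE finite_aug_nodes in \<open>auto simp: aug_edges_eq\<close>)
  also have "\<dots> = (\<Sum>(k,l)\<in>E. (\<Sum>x\<in>?V. incA mu x (Ec k l) * y x)\<^sup>2) + (\<Sum>i<n. \<Sum>j<m. (\<Sum>x\<in>?V. incA mu x (Ev i j) * y x)\<^sup>2)"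
    by (rule sum_aug_edges[OF fE])
  also have "\<dots> = Dq E mu (\<lambda>i. y (Cn i)) + (\<Sum>i<n. \<Sum>j<m. (mu (Ev i j))\<^sup>2 * (y (Cn i) - y (Vn i j))\<^sup>2)"
  proof -
    have "(\<Sum>(k,l)\<in>E. (\<Sum>x\<in>?V. incA mu x (Ec k l) * y x)\<^sup>2) = Dq E mu (\<lambda>i. y (Cn i))"
      unfolding Dq_def
    proof (intro sum.cong refl, clarify)
      fix k l assume "(k, l) \<in> E"
      then have "k < n" "l < n" using E_sub by auto
      show "(\<Sum>x\<in>?V. incA mu x (Ec k l) * y x)\<^sup>2 = (mu (Ec k l))\<^sup>2 * (y (Cn k) - y (Cn l))\<^sup>2"
        unfolding incA_sum_Ec[OF \<open>k < n\<close> \<open>l < n\<close>] by (simp add: power_mult_distrib)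
    qed
    moreover have "(\<Sum>i<n. \<Sum>j<m. (\<Sum>x\<in>?V. incA mu x (Ev i j) * y x)\<^sup>2) = (\<Sum>i<n. \<Sum>j<m. (mu (Ev i j))\<^sup>2 * (y (Cn i) - y (Vn i j))\<^sup>2)"
      by (intro sum.cong refl) (simp only: incA_sum_Ev lessThan_iff power_mult_distrib)
    ultimately show ?thesis by simp
  qed
  finally show ?thesis .
qed


theorem lemma5:
  fixes n m :: nat
    and E :: "(nat \<times> nat) set"
    and sigma :: "nat \<Rightarrow> real"
    and Lw :: "nat \<Rightarrow> nat \<Rightarrow> real"
    and mu :: "aedge \<Rightarrow> real"
    and sig kap :: real
  assumes n2: "2 \<le> n"
    and E_sub: "E \<subseteq> {..<n} \<times> {..<n}"
    and E_loop: "\<forall>(k, l)\<in>E. k \<noteq> l"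
    and E_orient: "\<forall>(k, l)\<in>E. (l, k) \<notin> E"
    and conn: "graph_connected n E"
    and sigma_pos: "\<forall>i<n. sigma i > 0"
    and Lw_pos: "\<forall>i<n. \<forall>j<m. Lw i j > 0"
    and mu_comm_pos: "\<forall>(k, l)\<in>E. mu (Ec k l) > 0"
    and mu_virt_pos: "\<forall>i<n. \<forall>j<m. mu (Ev i j) > 0"
    and sig_ge: "\<forall>i<n. sig \<ge> sigma i"
    and kap_ge: "\<forall>i<n. kap \<ge> kappa sigma Lw m i"
    and mu_virt: "\<forall>i<n. \<forall>j<m. (mu (Ev i j))\<^sup>2 =
        lambda_min_pos {..<n} (lapL E mu) / (sig * kappa sigma Lw m i) * Lw i j"
  shows "lambda_min_pos (aug_nodes n m) (Ltilde E n m mu sigma Lw)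
           \<ge> lambda_min_pos {..<n} (lapL E mu) / (2 * sig * kap)"
proof -
  define lam where "lam = lambda_min_pos {..<n} (lapL E mu)"
  have fE: "finite E" using E_sub finite_subset by blast
  have Lf: "lam > 0 \<and> (\<forall>y. Dq E mu y \<ge> lam * (\<Sum>i<n. (y i - (\<Sum>k<n. y k) / n)\<^sup>2))"
    unfolding lam_def by (rule L_facts[OF n2 E_sub conn mu_comm_pos])
  then have lam_pos: "lam > 0" and poinc: "\<And>y. Dq E mu y \<ge> lam * (\<Sum>i<n. (y i - (\<Sum>k<n. y k) / n)\<^sup>2)"
    by auto
  define V where "V = aug_nodes n m"
  define T where "T = Ltilde E n m mu sigma Lw"
  define S where "S = Sigma_diag sigma Lw"
  define w where "w = (\<lambda>x. sqrt (S x))"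
  have finV: "finite V" by (simp add: V_def finite_aug_nodes)
  have Spos: "S x > 0" if "x \<in> V" for x
    using that sigma_pos Lw_pos unfolding V_def aug_nodes_def S_def by auto
  have sig_pos: "sig > 0" using sig_ge sigma_pos n2 by (metis less_le_trans not_less zero_less_numeral less_le_trans order.strict_trans2 pos2)
  have kap1: "kappa sigma Lw m i \<ge> 1" if "i < n" for i
  proof -
    have "(\<Sum>j<m. Lw i j) \<ge> 0" using Lw_pos that by (intro sum_nonneg) (auto intro: less_imp_le)
    moreover have "sigma i > 0" using sigma_pos that by simp
    ultimately show ?thesis by (simp add: kappa_def)
  qed
  have kap_pos: "kap > 0" using kap1[of 0] kap_ge n2 by force
  define c0 where "c0 = lam / (2 * sig * kap)"
  have c0_pos: "c0 > 0" using lam_pos sig_pos kap_pos by (simp add: c0_def)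
  have KI: "qf V T v \<ge> c0 * nsq V v" if vw: "ip V w v = 0" for v
  proof -
    define y where "y = (\<lambda>x. v x / sqrt (S x))"
    have qfT: "qf V T v = Dq E mu (\<lambda>i. y (Cn i)) + (\<Sum>i<n. \<Sum>j<m. (mu (Ev i j))\<^sup>2 * (y (Cn i) - y (Vn i j))\<^sup>2)"
      unfolding V_def T_def by (rule qf_Ltilde[OF E_sub]) (simp add: y_def S_def)
    have sq: "(v x)\<^sup>2 = S x * (y x)\<^sup>2" if "x \<in> V" for x
      using Spos[OF that] by (simp add: y_def power_divide)
    have lin: "w x * v x = S x * y x" if "x \<in> V" for x
    proof -
      have "sqrt (S x) * sqrt (S x) = S x" using Spos[OF that] by simp
      then show ?thesis using Spos[OF that] by (simp add: w_def y_def field_simps)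
    qed
    have Cn_in: "Cn i \<in> V" if "i < n" for i using that by (simp add: V_def aug_nodes_def)
    have Vn_in: "Vn i j \<in> V" if "i < n" "j < m" for i j using that by (simp add: V_def aug_nodes_def)
    have nsqv: "nsq V v = (\<Sum>i<n. sigma i * (y (Cn i))\<^sup>2) + (\<Sum>i<n. \<Sum>j<m. Lw i j * (y (Vn i j))\<^sup>2)"
    proof -
      have "nsq V v = (\<Sum>x\<in>V. S x * (y x)\<^sup>2)" unfolding nsq_def by (intro sum.cong refl) (rule sq)
      also have "\<dots> = (\<Sum>i<n. sigma i * (y (Cn i))\<^sup>2) + (\<Sum>i<n. \<Sum>j<m. Lw i j * (y (Vn i j))\<^sup>2)"
        unfolding V_def sum_aug_nodes by (simp add: S_def)
      finally show ?thesis .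
    qed
    have cons: "(\<Sum>i<n. sigma i * y (Cn i)) + (\<Sum>i<n. \<Sum>j<m. Lw i j * y (Vn i j)) = 0"
    proof -
      have "ip V w v = (\<Sum>x\<in>V. S x * y x)" unfolding ip_def by (intro sum.cong refl) (rule lin)
      also have "\<dots> = (\<Sum>i<n. sigma i * y (Cn i)) + (\<Sum>i<n. \<Sum>j<m. Lw i j * y (Vn i j))"
        unfolding V_def sum_aug_nodes by (simp add: S_def)
      finally show ?thesis using vw by simp
    qed
    have "lam / (2 * sig * kap) * ((\<Sum>i<n. sigma i * (y (Cn i))\<^sup>2) + (\<Sum>i<n. \<Sum>j<m. Lw i j * (y (Vn i j))\<^sup>2))
      \<le> Dq E mu (\<lambda>i. y (Cn i)) + (\<Sum>i<n. \<Sum>j<m. (mu (Ev i j))\<^sup>2 * (y (Cn i) - y (Vn i j))\<^sup>2)"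
    proof (rule KI_alg)
      show "0 < n" using n2 by simp
      show "0 < lam" by (rule lam_pos)
      show "\<forall>i<n. 0 < sigma i" by (rule sigma_pos)
      show "\<forall>i<n. sigma i \<le> sig" using sig_ge by simp
      show "\<forall>i<n. \<forall>j<m. 0 < Lw i j" by (rule Lw_pos)
      show "\<forall>i<n. 1 + (\<Sum>j<m. Lw i j) / sigma i \<le> kap" using kap_ge by (simp add: kappa_def)
      show "\<forall>i<n. \<forall>j<m. (mu (Ev i j))\<^sup>2 = lam / (sig * (1 + (\<Sum>j<m. Lw i j) / sigma i)) * Lw i j"
        using mu_virt by (simp add: kappa_def lam_def)
      show "lam * (\<Sum>i<n. (y (Cn i) - (\<Sum>k<n. y (Cn k)) / n)\<^sup>2) \<le> Dq E mu (\<lambda>i. y (Cn i))"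
        using poinc[of "\<lambda>i. y (Cn i)"] by simp
      show "(\<Sum>i<n. sigma i * y (Cn i)) + (\<Sum>i<n. \<Sum>j<m. Lw i j * y (Vn i j)) = 0" by (rule cons)
    qed
    then show ?thesis unfolding qfT nsqv c0_def .
  qed
  have sym: "\<forall>x\<in>V. \<forall>z\<in>V. T x z = T z x"
    by (simp add: T_def Ltilde_def AAT_def mult.commute)
  have Mw: "\<forall>x\<in>V. mv V T w x = 0"
  proof
    fix x assume x: "x \<in> V"
    have "mv V T w x = (\<Sum>z\<in>V. AAT E n m mu x z / sqrt (S x))"
      unfolding mv_def T_def Ltilde_def w_def S_def[symmetric]
      apply (intro sum.cong refl)
      subgoal for z using Spos[of z] Spos[OF x] by (auto simp: field_simps)
      done
    also have "\<dots> = (\<Sum>z\<in>V. AAT E n m mu x z) / sqrt (S x)" by (simp add: sum_divide_distrib)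
    also have "(\<Sum>z\<in>V. AAT E n m mu x z) = (\<Sum>e\<in>aug_edges E n m. incA mu x e * (\<Sum>z\<in>V. incA mu z e * 1))"
      unfolding AAT_def sum_distrib_left by (simp add: sum.swap[of _ V])
    also have "\<dots> = 0"
      by (intro sum.neutral ballI) (simp only: V_def incA_sum_one[OF E_sub] mult_zero_right)
    finally show "mv V T w x = 0" by simp
  qed
  define z0 where "z0 = (\<lambda>x. (if x = Cn 0 then sqrt (S (Cn 1)) else 0) - (if x = Cn 1 then sqrt (S (Cn 0)) else 0))"
  have C0: "Cn 0 \<in> V" and C1: "Cn 1 \<in> V" using n2 by (auto simp: V_def aug_nodes_def)
  have "ip V w z0 = 0"
  proof -
    have "ip V w z0 = (\<Sum>x\<in>V. if x = Cn 0 then w x * sqrt (S (Cn 1)) else 0) - (\<Sum>x\<in>V. if x = Cn 1 then w x * sqrt (S (Cn 0)) else 0)"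
      unfolding ip_def z0_def sum_subtractf[symmetric] by (intro sum.cong refl) (simp add: algebra_simps)
    also have "\<dots> = 0" using C0 C1 finV by (simp add: sum.delta w_def)
    finally show ?thesis .
  qed
  moreover have "\<exists>x\<in>V. z0 x \<noteq> 0" using C0 C1 Spos[OF C1] by (intro bexI[of _ "Cn 0"]) (auto simp: z0_def)
  ultimately obtain y0 mu0 where y0nz: "\<exists>x\<in>V. y0 x \<noteq> 0" and y0w: "ip V w y0 = 0"
    and ev: "\<forall>x\<in>V. mv V T y0 x = mu0 * y0 x" and mu0: "mu0 = qf V T y0"
    using var_min[OF finV sym Mw] by blast
  have nsqpos: "nsq V v > 0" if vnz0: "\<exists>x\<in>V. v x \<noteq> 0" for v
  proof -
    obtain x where "x \<in> V" "v x \<noteq> 0" using vnz0 by blast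
    then show ?thesis using nsq_zero[OF finV, of v x] nsq_nonneg[of V v] by linarith
  qed
  have "mu0 \<ge> c0 * nsq V y0" using KI[OF y0w] mu0 by simp
  moreover have "c0 * nsq V y0 > 0" using c0_pos nsqpos[OF y0nz] by simp
  ultimately have mu0nz: "mu0 \<noteq> 0" by simp
  define ST where "ST = {lam. is_eigenvalue V T lam \<and> lam \<noteq> 0}"
  have "is_eigenvalue V T mu0" unfolding is_eigenvalue_def using y0nz ev by (auto simp: mv_def)
  then have mu0ST: "mu0 \<in> ST" using mu0nz by (simp add: ST_def)
  have finST: "finite ST" using finite_eig[OF finV, of T] by (rule finite_subset[rotated]) (auto simp: ST_def)
  have "Min ST \<in> ST" using finST mu0ST by (intro Min_in) auto
  then obtain v where vnz: "\<exists>x\<in>V. v x \<noteq> 0" and vev: "\<forall>x\<in>V. mv V T v x = Min ST * v x"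
    and lnz: "Min ST \<noteq> 0" unfolding ST_def is_eigenvalue_def mv_def by blast
  have "ip V w v = 0" by (rule eig_orth[OF sym Mw vev lnz])
  then have "qf V T v \<ge> c0 * nsq V v" by (rule KI)
  moreover have "qf V T v = Min ST * nsq V v" by (rule eig_qf[OF vev])
  ultimately have "c0 * nsq V v \<le> Min ST * nsq V v" by simp
  then have "c0 \<le> Min ST" using nsqpos[OF vnz] by simp
  moreover have "lambda_min_pos (aug_nodes n m) (Ltilde E n m mu sigma Lw) = Min ST"
    by (simp add: lambda_min_pos_def ST_def V_def T_def)
  ultimately show ?thesis by (simp add: c0_def lam_def)
qed

end
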